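(* Consider the DAGP iteration described in the context, with parameters $\mu,\rho,\alpha>0$. Assume $\mathbf{W}$ has zero row sums, $\mathbf{Q}$ has zero column sums, $\ker(\mathbf{Q})=\ker(\mathbf{W}^T)$, and $\ker(\mathbf{W})=\mathrm{span}\{\mathbf{1}_M\}$. Let $(\mathbf{x}^v,\mathbf{g}^v,\mathbf{h}^v)_{v=1}^M$ be a fixed point of the DAGP iteration (i.e. if $(\mathbf{x}^v_k,\mathbf{g}^v_k,\mathbf{h}^v_k)=(\mathbf{x}^v,\mathbf{g}^v,\mathbf{h}^v)$ for all $v$, then the update produces $(\mathbf{x}^v_{k+1},\mathbf{g}^v_{k+1},\mathbf{h}^v_{k+1})=(\mathbf{x}^v,\mathbf{g}^v,\mathbf{h}^v)$ for all $v$) with $\sum_{v=1}^M\mathbf{h}^v=\mathbf{0}$. Then there is $\mathbf{x}\in\bigcap_{v=1}^M S^v$ with $\mathbf{x}^v=\mathbf{x}$ for all $v$, and $$\mathbf{0}\in\sum_{v=1}^M\big(\partial I_{S^v}(\mathbf{x})+\nabla f^v(\mathbf{x})\big),$$ so that $\mathbf{x}$ is an optimal solution of $\min_{\mathbf{x}\in\mathbb{R}^m}\frac1M\sum_{v=1}^Mf^v(\mathbf{x})$ subject to $\mathbf{x}\in\bigcap_{v=1}^MS^v$.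
   Context: There are $M$ agents $v\in\{1,\dots,M\}$. Each agent has a convex differentiable function $f^v:\mathbb{R}^m\to\mathbb{R}$ and a nonempty closed convex set $S^v\subseteq\mathbb{R}^m$. $\mathrm{P}_S(\mathbf{y})=\arg\min_{\mathbf{x}\in S}\|\mathbf{x}-\mathbf{y}\|_2$ is the Euclidean projection onto $S$. The normal cone is $\partial I_S(\mathbf{x})=\{\mathbf{g}:\mathbf{g}^T(\mathbf{z}-\mathbf{x})\le 0\ \forall \mathbf{z}\in S\}$ for $\mathbf{x}\in S$ and $\emptyset$ otherwise; the sum of sets is the Minkowski sum. $\mathbf{W}=[w_{vu}]$ and $\mathbf{Q}=[q_{vu}]$ are real $M\times M$ matrices. DAGP (Double Averaging and Gradient Projection) with parameters $\mu,\rho,\alpha>0$ maintains, for each agent $v$, vectors $\mathbf{x}^v_k,\mathbf{g}^v_k,\mathbf{h}^v_k\in\mathbb{R}^m$ and updates, for $k\ge0$ and all $v$: $\mathbf{z}^v_{k+1}=\mathbf{x}^v_k-\sum_{u=1}^M w_{vu}\mathbf{x}^u_k-\mu(\nabla f^v(\mathbf{x}^v_k)-\mathbf{g}^v_k)$; $\mathbf{x}^v_{k+1}=\mathrm{P}_{S^v}(\mathbf{z}^v_{k+1})$; $\mathbf{g}^v_{k+1}=\mathbf{g}^v_k+\rho\big[\nabla f^v(\mathbf{x}^v_k)-\mathbf{g}^v_k+\tfrac1\mu(\mathbf{z}^v_{k+1}-\mathbf{x}^v_{k+1})\big]+\alpha(\mathbf{h}^v_k-\mathbf{g}^v_k)$;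 $\mathbf{h}^v_{k+1}=\mathbf{h}^v_k-\sum_{u=1}^M q_{vu}(\mathbf{h}^u_k-\mathbf{g}^u_k)$. *)

theory Defs
  imports "HOL-Analysis.Analysis"
begin

text \<open>Normal cone of S at x (subdifferential of the indicator function of S):
  empty outside S.\<close>
definition normal_cone :: "'a::real_inner set \<Rightarrow> 'a \<Rightarrow> 'a set" where
  "normal_cone S x = (if x \<in> S then {g. \<forall>z\<in>S. g \<bullet> (z - x) \<le> 0} else {})"

definition mat_ker :: "real^'n^'n \<Rightarrow> (real^'n) set" where
  "mat_ker A = {c. A *v c = 0}"

end

theory Submission
  imports Defs
begin

lemma convex_grad_ineq:
  fixes f :: "'a::euclidean_space \<Rightarrow> real"
  assumes cv: "convex_on UNIV f" and gr: "\<And>y. (f has_derivative (\<lambda>d. G y \<bullet> d)) (at y)"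
  shows "f x + G x \<bullet> (y - x) \<le> f y"
proof -
  define d where "d = y - x"
  define g where "g = (\<lambda>t::real. f (x + t *\<^sub>R d))"
  have "convex_on UNIV g"
  proof (rule convex_onI)
    fix t a b :: real assume t: "t > 0" "t < 1"
    have "x + ((1 - t) *\<^sub>R a + t *\<^sub>R b) *\<^sub>R d = (1 - t) *\<^sub>R (x + a *\<^sub>R d) + t *\<^sub>R (x + b *\<^sub>R d)"
      by (simp add: algebra_simps)
    then show "g ((1 - t) *\<^sub>R a + t *\<^sub>R b) \<le> (1 - t) * g a + t * g b"
      unfolding g_def using convex_onD[OF cv, of t] t by simp
  qed simp
  moreover have "(g has_field_derivative (G x \<bullet> d)) (at 0 within UNIV)"
  proof -
    have l: "((\<lambda>t::real. x + t *\<^sub>R d) has_derivative (\<lambda>t. t *\<^sub>R d)) (at 0)"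
      by (auto intro!: derivative_eq_intros)
    have "((\<lambda>t. f (x + t *\<^sub>R d)) has_derivative (\<lambda>t. G x \<bullet> (t *\<^sub>R d))) (at 0)"
      using has_derivative_compose[OF l gr[of "x + 0 *\<^sub>R d"]] by simp
    moreover have "(\<lambda>t. G x \<bullet> (t *\<^sub>R d)) = (*) (G x \<bullet> d)" by (rule ext) simp
    ultimately show ?thesis unfolding has_field_derivative_def g_def by simp
  qed
  ultimately have "g 1 - g 0 \<ge> (G x \<bullet> d) * (1 - 0)"
    by (intro convex_on_imp_above_tangent[where A=UNIV]) auto
  then show ?thesis by (simp add: g_def d_def)
qed

theorem theorem1:
  fixes W Q :: "real^'M^'M"
    and f :: "'M \<Rightarrow> 'a::euclidean_space \<Rightarrow> real"
    and gradf :: "'M \<Rightarrow> 'a \<Rightarrow> 'a"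
    and S :: "'M \<Rightarrow> 'a set"
    and \<mu> \<rho> \<alpha> :: real
    and xs gs hs :: "'M \<Rightarrow> 'a"
  assumes params: "\<mu> > 0" "\<rho> > 0" "\<alpha> > 0"
    and f_convex: "\<And>v. convex_on UNIV (f v)"
    and f_grad: "\<And>v y. (f v has_derivative (\<lambda>d. gradf v y \<bullet> d)) (at y)"
    and S_closed: "\<And>v. closed (S v)"
    and S_convex: "\<And>v. convex (S v)"
    and S_nonempty: "\<And>v. S v \<noteq> {}"
    and W_rows: "W *v (1::real^'M) = 0"
    and Q_cols: "transpose Q *v (1::real^'M) = 0"
    and ker_Q: "mat_ker Q = mat_ker (transpose W)"
    and ker_W: "mat_ker W = span {1::real^'M}"
    and fixed_point: "\<And>v. let z = xs v - (\<Sum>u\<in>UNIV. (W $ v $ u) *\<^sub>R xs u)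
                                   - \<mu> *\<^sub>R (gradf v (xs v) - gs v)
            in closest_point (S v) z = xs v
             \<and> gs v + \<rho> *\<^sub>R (gradf v (xs v) - gs v + (1 / \<mu>) *\<^sub>R (z - closest_point (S v) z))
                 + \<alpha> *\<^sub>R (hs v - gs v) = gs v
             \<and> hs v - (\<Sum>u\<in>UNIV. (Q $ v $ u) *\<^sub>R (hs u - gs u)) = hs v"
    and h_sum: "(\<Sum>v\<in>UNIV. hs v) = 0"
  shows "\<exists>x \<in> (\<Inter>v. S v). (\<forall>v. xs v = x)
           \<and> (\<exists>g :: 'M \<Rightarrow> 'a. (\<forall>v. g v \<in> normal_cone (S v) x)
                 \<and> (\<Sum>v\<in>UNIV. g v + gradf v x) = 0)
           \<and> (\<forall>y \<in> (\<Inter>v. S v). (1 / real CARD('M)) * (\<Sum>v\<in>UNIV. f v x)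
                                 \<le> (1 / real CARD('M)) * (\<Sum>v\<in>UNIV. f v y))"
proof -
  define Wx where "Wx v = (\<Sum>u\<in>UNIV. (W $ v $ u) *\<^sub>R xs u)" for v
  define d where "d v = hs v - gs v" for v
  define z where "z v = xs v - Wx v - \<mu> *\<^sub>R (gradf v (xs v) - gs v)" for v
  have fp: "closest_point (S v) (z v) = xs v
             \<and> gs v + \<rho> *\<^sub>R (gradf v (xs v) - gs v + (1 / \<mu>) *\<^sub>R (z v - closest_point (S v) (z v)))
                 + \<alpha> *\<^sub>R (hs v - gs v) = gs v
             \<and> hs v - (\<Sum>u\<in>UNIV. (Q $ v $ u) *\<^sub>R (hs u - gs u)) = hs v" for v
    unfolding z_def Wx_def using fixed_point[of v] unfolding Let_def .
  have cp: "closest_point (S v) (z v) = xs v" for v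
    using fp[of v] by blast
  have geq: "gs v + \<rho> *\<^sub>R (gradf v (xs v) - gs v + (1 / \<mu>) *\<^sub>R (z v - xs v))
                 + \<alpha> *\<^sub>R (hs v - gs v) = gs v" for v
    using fp[of v] by metis
  have heq: "(\<Sum>u\<in>UNIV. (Q $ v $ u) *\<^sub>R d u) = 0" for v
    using fixed_point[of v] unfolding Let_def d_def by simp
  have xsS: "xs v \<in> S v" for v
    using closest_point_in_set[OF S_closed S_nonempty, of v "z v"] cp[of v] by simp
  have mu0: "\<mu> \<noteq> 0" using params by simp
  have inner1: "gradf v (xs v) - gs v + (1 / \<mu>) *\<^sub>R (z v - xs v) = - ((1/\<mu>) *\<^sub>R Wx v)" for v
  proof -
    have "(1 / \<mu>) *\<^sub>R (z v - xs v) = - ((1/\<mu>) *\<^sub>R Wx v) - (gradf v (xs v) - gs v)"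
      using mu0 by (simp add: z_def algebra_simps)
    then show ?thesis by simp
  qed
  have Wxd: "Wx v = (\<alpha> * \<mu> / \<rho>) *\<^sub>R d v" for v
  proof -
    have "\<rho> *\<^sub>R (- ((1/\<mu>) *\<^sub>R Wx v)) + \<alpha> *\<^sub>R d v = 0"
    proof -
      have "\<rho> *\<^sub>R (gradf v (xs v) - gs v + (1 / \<mu>) *\<^sub>R (z v - xs v)) + \<alpha> *\<^sub>R (hs v - gs v) = 0"
        using geq[of v] by (simp add: add.assoc)
      then show ?thesis unfolding inner1 d_def .
    qed
    then have "(\<rho> / \<mu>) *\<^sub>R Wx v = \<alpha> *\<^sub>R d v" by (simp add: algebra_simps)
    then have "(\<mu> / \<rho>) *\<^sub>R ((\<rho> / \<mu>) *\<^sub>R Wx v) = (\<mu> / \<rho>) *\<^sub>R (\<alpha> *\<^sub>R d v)" by simp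
    then show ?thesis using params by (simp add: field_simps)
  qed
  have WTd: "(\<Sum>u\<in>UNIV. (W $ u $ v) *\<^sub>R d u) = 0" for v
  proof -
    define c where "c = (\<chi> u. d u \<bullet> (\<Sum>u\<in>UNIV. (W $ u $ v) *\<^sub>R d u))"
    have "Q *v c = 0"
    proof (rule vec_eq_iff[THEN iffD2, rule_format])
      fix w
      have "(Q *v c) $ w = (\<Sum>u\<in>UNIV. (Q $ w $ u) *\<^sub>R d u) \<bullet> (\<Sum>u\<in>UNIV. (W $ u $ v) *\<^sub>R d u)"
        by (simp add: matrix_vector_mult_def c_def inner_sum_left)
      then show "(Q *v c) $ w = 0 $ w" using heq[of w] by simp
    qed
    then have "c \<in> mat_ker (transpose W)" using ker_Q unfolding mat_ker_def by auto
    then have "(transpose W *v c) $ v = 0" unfolding mat_ker_def by simp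
    then have "(\<Sum>u\<in>UNIV. (W $ u $ v) *\<^sub>R d u) \<bullet> (\<Sum>u\<in>UNIV. (W $ u $ v) *\<^sub>R d u) = 0"
      by (simp add: matrix_vector_mult_def c_def inner_sum_left transpose_def)
    then show ?thesis by simp
  qed
  have sum0: "(\<Sum>v\<in>UNIV. d v \<bullet> Wx v) = 0"
  proof -
    have "(\<Sum>v\<in>UNIV. d v \<bullet> Wx v) = (\<Sum>v\<in>UNIV. \<Sum>u\<in>UNIV. W $ v $ u * (d v \<bullet> xs u))"
      by (simp add: Wx_def inner_sum_right)
    also have "\<dots> = (\<Sum>u\<in>UNIV. \<Sum>v\<in>UNIV. W $ v $ u * (d v \<bullet> xs u))"
      by (rule sum.swap)
    also have "\<dots> = (\<Sum>u\<in>UNIV. (\<Sum>v\<in>UNIV. (W $ v $ u) *\<^sub>R d v) \<bullet> xs u)"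
      by (simp add: inner_sum_left)
    also have "\<dots> = 0" using WTd by simp
    finally show ?thesis .
  qed
  have cpos: "\<alpha> * \<mu> / \<rho> > 0" using params by simp
  have "(\<Sum>v\<in>UNIV. (\<alpha> * \<mu> / \<rho>) * (d v \<bullet> d v)) = 0"
    using sum0 by (simp add: Wxd)
  then have "\<forall>v\<in>UNIV. (\<alpha> * \<mu> / \<rho>) * (d v \<bullet> d v) = 0"
    by (subst sum_nonneg_eq_0_iff[symmetric]) (use cpos params in auto)
  then have d0: "d v = 0" for v using cpos by auto
  have Wx0: "Wx v = 0" for v using Wxd d0 by simp
  have xeq: "xs u = xs v" for u v
  proof -
    define b where "b = xs u - xs v"
    define c where "c = (\<chi> w. xs w \<bullet> b)"
    have "W *v c = 0"
    proof (rule vec_eq_iff[THEN iffD2, rule_format])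
      fix w
      have "(W *v c) $ w = Wx w \<bullet> b"
        by (simp add: matrix_vector_mult_def c_def inner_sum_left Wx_def)
      then show "(W *v c) $ w = 0 $ w" using Wx0 by simp
    qed
    then have "c \<in> span {1}" using ker_W unfolding mat_ker_def by auto
    then obtain k where "c = k *\<^sub>R 1" by (auto simp: span_singleton)
    then have "c $ u = c $ v" by simp
    then have "b \<bullet> b = 0" by (simp add: c_def b_def inner_diff_left)
    then show ?thesis by (simp add: b_def)
  qed
  define x where "x = xs undefined"
  have xsx: "xs v = x" for v unfolding x_def by (rule xeq)
  have xS: "x \<in> (\<Inter>v. S v)" using xsS xsx by (metis INT_I)
  define g where "g v = (1 / \<mu>) *\<^sub>R (z v - xs v)" for v
  have gN: "g v \<in> normal_cone (S v) x" for v
  proof -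
    have "\<forall>y\<in>S v. g v \<bullet> (y - x) \<le> 0"
    proof
      fix y assume "y \<in> S v"
      then have "(z v - xs v) \<bullet> (y - xs v) \<le> 0"
        using closest_point_dot[OF S_convex S_closed, of y v "z v"] cp[of v] by simp
      then show "g v \<bullet> (y - x) \<le> 0" using params xsx[of v]
        by (simp add: g_def divide_nonpos_pos)
    qed
    then show ?thesis using xS unfolding normal_cone_def by auto
  qed
  have gform: "g v = gs v - gradf v x" for v
  proof -
    have "g v = (1/\<mu>) *\<^sub>R (- \<mu> *\<^sub>R (gradf v (xs v) - gs v))"
      unfolding g_def z_def using Wx0[of v] by simp
    then show ?thesis using mu0 xsx[of v] by (simp add: algebra_simps)
  qed
  have gsum: "(\<Sum>v\<in>UNIV. g v + gradf v x) = 0"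
  proof -
    have "(\<Sum>v\<in>UNIV. g v + gradf v x) = (\<Sum>v\<in>UNIV. hs v)"
      using d0 by (intro sum.cong) (auto simp: gform d_def)
    then show ?thesis using h_sum by simp
  qed
  have opt: "(\<Sum>v\<in>UNIV. f v x) \<le> (\<Sum>v\<in>UNIV. f v y)" if yS: "y \<in> (\<Inter>v. S v)" for y
  proof -
    have "(\<Sum>v\<in>UNIV. f v x + gradf v x \<bullet> (y - x)) \<le> (\<Sum>v\<in>UNIV. f v y)"
      by (intro sum_mono convex_grad_ineq[OF f_convex f_grad])
    moreover have "(\<Sum>v\<in>UNIV. gradf v x \<bullet> (y - x)) \<ge> 0"
    proof -
      have "(\<Sum>v\<in>UNIV. gradf v x \<bullet> (y - x)) = - (\<Sum>v\<in>UNIV. g v \<bullet> (y - x))"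
      proof -
        have "(\<Sum>v\<in>UNIV. (g v + gradf v x) \<bullet> (y - x)) = 0"
          using gsum by (simp add: inner_sum_left[symmetric])
        then show ?thesis by (simp add: inner_add_left sum.distrib)
      qed
      moreover have "(\<Sum>v\<in>UNIV. g v \<bullet> (y - x)) \<le> 0"
        using gN yS xS by (intro sum_nonpos) (auto simp: normal_cone_def)
      ultimately show ?thesis by simp
    qed
    ultimately show ?thesis by (simp add: sum.distrib)
  qed
  show ?thesis
    using xS xsx gN gsum opt by (intro bexI[of _ x]) (auto intro!: divide_right_mono)
qed

end
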